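(* Let $\mathcal{T}$ be an MPQ-tree of an interval graph $G=(V,E)$, let $(x,y)\in E$ with $x$ over $y$ and $node(x)\neq node(y)$. If the $\langle x,y\rangle$-tree-path is rotable, then $(x,y)$ is an interval edge.
   Context: Graphs are finite and simple; for $G=(V,E)$ and $e\in E$, $G-e=(V,E\setminus\{e\})$. An edge $(x,y)\in E$ of an interval graph $G$ is an interval edge if $G-(x,y)$ is an interval graph. An MPQ-tree of an interval graph $G=(V,E)$, $V=\{1,\dots,n\}$, is a rooted plane tree whose nodes are P-nodes and Q-nodes. Each P-node carries a (possibly empty) set of vertices. A Q-node has $k\ge 3$ ordered positions $1,\dots,k$; position $i$ carries a set $S_i\subseteq V$ (the $i$-th section) and a child subtree $T_i$, which may be empty. Every vertex $v$ is assigned to exactly one node $node(v)$: either $v$ lies in the set of the P-node $node(v)$, or $node(v)$ is a Q-node and $v$ lies exactly in the sections $S_{l(v)},\dots,S_{r(v)}$ of it, with $l(v)<r(v)$. For a node with child subtrees $T_1,\dots,T_k$, $V_i$ denotes the set of vertices assigned to nodes of $T_i$ ($V_i=\emptyset$ if $T_i$ is empty). The maximal cliques of $G$ are in bijection with the descending paths from the root which at a P-node continue into one of its children (stopping if there is none) and at a Q-node choose a position $i$ and continue into $T_i$ (stopping if $T_i$ is empty); the clique is the union of the sets of the visited P-nodes and the chosen sections. Reading these cliques left to right gives a linear order of the maximal cliques, and the orders obtained this way after arbitrarily permuting children of P-nodes and reversing the positions of Q-nodes are exactly the orders of the maximal cliques of $G$ in which the cliques containing any fixed vertex are consecutive. Moreover,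 for every Q-node with sections $S_1,\dots,S_k$: (a) $V_1\neq\emptyset$ and $V_k\ne\emptyset$; (b) $S_1\subseteq S_2$ and $S_k\subseteq S_{k-1}$; (c) $S_{i-1}\cap S_i\neq\emptyset$ for $2\le i\le k$; (d) $S_{i-1}\neq S_i$ for $2\le i\le k$; (e) $(S_i\cap S_{i+1})\setminus S_1\neq\emptyset$ and $(S_{i-1}\cap S_i)\setminus S_k\neq\emptyset$ for $2\le i\le k-1$; (f) $(S_{i-1}\cup V_{i-1})\setminus S_i\neq\emptyset$ and $(S_i\cup V_i)\setminus S_{i-1}\neq\emptyset$ for $2\le i\le k$; and further (g) no empty P-node has an empty P-node as its parent, (h) no P-node has exactly one child whose root is a P-node, (i) every child subtree of a P-node is nonempty. We say $x$ is over $y$ if $node(x)$ is the lowest common ancestor of $node(x)$ and $node(y)$ in $\mathcal{T}$. For $x$ over $y$ with $node(x)\ne node(y)$, the $\langle x,y\rangle$-tree-path is the tree path $node(x)=n_1,n_2,\dots,n_t=node(y)$. For a Q-node with sections $S_1,\dots,S_k$, section $S_a$ is central if $1<a<k$, and for a vertex $v$ of that Q-node it is $v$-central if $l(v)<a<r(v)$ and $v$-non-central if $a\in\{l(v),r(v)\}$. The path goes through a central section if for some $1<i<t$, $n_i$ is a Q-node and $n_{i+1}$ lies in the subtree $T_a$ of a central section $S_a$ of $n_i$. The path starts in a central (resp. non-central) section if $n_1$ is a Q-node and $n_2$ lies in the subtree $T_a$ of an $x$-central (resp. $x$-non-central) section $S_a$ of $n_1$. It starts in a P-node if $n_1$ is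 a P-node, and ends in a P-node (resp. Q-node) if $n_t$ is a P-node (resp. Q-node). The path is almost rotable if it does not go through a central section and $n_t$ is a P-node that is a leaf of $\mathcal{T}$; it is rotable if it is almost rotable and it either starts in a P-node or starts in a non-central section. *)

theory Defs
  imports Complex_Main "HOL-Library.Multiset"
begin

definition simple_graph :: "nat set \<Rightarrow> nat set set \<Rightarrow> bool" where
  "simple_graph V E \<longleftrightarrow> finite V \<and>
     (\<forall>e\<in>E. \<exists>u v. u \<noteq> v \<and> u \<in> V \<and> v \<in> V \<and> e = {u, v})"

definition interval_graph :: "nat set \<Rightarrow> nat set set \<Rightarrow> bool" where
  "interval_graph V E \<longleftrightarrow> simple_graph V E \<and>
     (\<exists>a b :: nat \<Rightarrow> real. (\<forall>v\<in>V. a v \<le> b v) \<and>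
        (\<forall>u\<in>V. \<forall>v\<in>V. u \<noteq> v \<longrightarrow>
            ({u, v} \<in> E \<longleftrightarrow> max (a u) (a v) \<le> min (b u) (b v))))"

definition clique :: "nat set \<Rightarrow> nat set set \<Rightarrow> nat set \<Rightarrow> bool" where
  "clique V E C \<longleftrightarrow> C \<subseteq> V \<and> (\<forall>u\<in>C. \<forall>v\<in>C. u \<noteq> v \<longrightarrow> {u, v} \<in> E)"

definition max_cliques :: "nat set \<Rightarrow> nat set set \<Rightarrow> nat set set" where
  "max_cliques V E = {C. clique V E C \<and> \<not> (\<exists>C'. clique V E C' \<and> C \<subset> C')}"

definition interval_edge :: "nat set \<Rightarrow> nat set set \<Rightarrow> nat \<Rightarrow> nat \<Rightarrow> bool" where
  "interval_edge V E x y \<longleftrightarrow> interval_graph V E \<and> {x, y} \<in> E \<and> interval_graph V (E - {{x, y}})"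

text \<open>A P-node carries a vertex set and its (ordered, nonempty) child subtrees;
  a Q-node carries its positions in order, each position being a section together
  with a possibly empty child subtree (None = empty subtree).\<close>
datatype mpq = PNode "nat set" "mpq list" | QNode "(nat set \<times> mpq option) list"

text \<open>Nodes are addressed by paths from the root: at a P-node the i-th child (0-based),
  at a Q-node the subtree of position i (0-based).\<close>
fun sub :: "mpq \<Rightarrow> nat list \<Rightarrow> mpq option" where
  "sub t [] = Some t"
| "sub (PNode S ts) (i # p) = (if i < length ts then sub (ts ! i) p else None)"
| "sub (QNode secs) (i # p) =
     (if i < length secs then (case snd (secs ! i) of None \<Rightarrow> None | Some t \<Rightarrow> sub t p) else None)"

fun node_verts :: "mpq \<Rightarrow> nat set" where
  "node_verts (PNode S ts) = S"
| "node_verts (QNode secs) = (\<Union>i<length secs. fst (secs ! i))"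

definition all_verts :: "mpq \<Rightarrow> nat set" where
  "all_verts t = {v. \<exists>p t'. sub t p = Some t' \<and> v \<in> node_verts t'}"

text \<open>The list (left to right) of cliques given by descending root paths.\<close>
fun cliques :: "mpq \<Rightarrow> nat set list" where
  "cliques (PNode S ts) =
     (if ts = [] then [S] else concat (map (\<lambda>t. map ((\<union>) S) (cliques t)) ts))"
| "cliques (QNode secs) =
     concat (map (\<lambda>st. case snd st of None \<Rightarrow> [fst st]
                                  | Some t \<Rightarrow> map ((\<union>) (fst st)) (cliques t)) secs)"

inductive variant :: "mpq \<Rightarrow> mpq \<Rightarrow> bool" where
  var_P: "list_all2 variant ts us \<Longrightarrow> mset us = mset ws \<Longrightarrow> variant (PNode S ts) (PNode S ws)"
| var_Q: "list_all2 (\<lambda>a b. fst a = fst b \<and> rel_option variant (snd a) (snd b)) secs secs'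
          \<Longrightarrow> variant (QNode secs) (QNode secs')"
| var_Qrev: "list_all2 (\<lambda>a b. fst a = fst b \<and> rel_option variant (snd a) (snd b)) secs secs'
          \<Longrightarrow> variant (QNode secs) (QNode (rev secs'))"

definition consecutive :: "nat set list \<Rightarrow> nat \<Rightarrow> bool" where
  "consecutive L v \<longleftrightarrow> (\<exists>i j. \<forall>k<length L. v \<in> L ! k \<longleftrightarrow> i \<le> k \<and> k \<le> j)"

text \<open>1-based sections S_i and sets V_i of a Q-node.\<close>
definition sec :: "(nat set \<times> mpq option) list \<Rightarrow> nat \<Rightarrow> nat set" where
  "sec secs i = fst (secs ! (i - 1))"

definition secV :: "(nat set \<times> mpq option) list \<Rightarrow> nat \<Rightarrow> nat set" where
  "secV secs i = (case snd (secs ! (i - 1)) of None \<Rightarrow> {} | Some t \<Rightarrow> all_verts t)"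

definition Q_conditions :: "(nat set \<times> mpq option) list \<Rightarrow> bool" where
  "Q_conditions secs \<longleftrightarrow> (let k = length secs; S = sec secs; W = secV secs in
     3 \<le> k \<and>
     \<comment> \<open>(a)\<close> W 1 \<noteq> {} \<and> W k \<noteq> {} \<and>
     \<comment> \<open>(b)\<close> S 1 \<subseteq> S 2 \<and> S k \<subseteq> S (k - 1) \<and>
     \<comment> \<open>(c)\<close> (\<forall>i. 2 \<le> i \<and> i \<le> k \<longrightarrow> S (i - 1) \<inter> S i \<noteq> {}) \<and>
     \<comment> \<open>(d)\<close> (\<forall>i. 2 \<le> i \<and> i \<le> k \<longrightarrow> S (i - 1) \<noteq> S i) \<and>
     \<comment> \<open>(e)\<close> (\<forall>i. 2 \<le> i \<and> i \<le> k - 1 \<longrightarrow>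
                 (S i \<inter> S (i + 1)) - S 1 \<noteq> {} \<and> (S (i - 1) \<inter> S i) - S k \<noteq> {}) \<and>
     \<comment> \<open>(f)\<close> (\<forall>i. 2 \<le> i \<and> i \<le> k \<longrightarrow>
                 (S (i - 1) \<union> W (i - 1)) - S i \<noteq> {} \<and> (S i \<union> W i) - S (i - 1) \<noteq> {}))"

definition is_P :: "mpq \<Rightarrow> bool" where
  "is_P t \<longleftrightarrow> (\<exists>S ts. t = PNode S ts)"

definition MPQ_tree :: "nat set \<Rightarrow> nat set set \<Rightarrow> mpq \<Rightarrow> bool" where
  "MPQ_tree V E T \<longleftrightarrow>
     \<comment> \<open>vertices at nodes are vertices of G\<close>
     (\<forall>p t. sub T p = Some t \<longrightarrow> node_verts t \<subseteq> V) \<and>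
     \<comment> \<open>every vertex is assigned to exactly one node\<close>
     (\<forall>v\<in>V. \<exists>!p. \<exists>t. sub T p = Some t \<and> v \<in> node_verts t) \<and>
     \<comment> \<open>a vertex of a Q-node lies exactly in sections l(v)..r(v), l(v) < r(v)\<close>
     (\<forall>p secs. sub T p = Some (QNode secs) \<longrightarrow>
        (\<forall>v \<in> node_verts (QNode secs). \<exists>l r. l < r \<and> r < length secs \<and>
            (\<forall>i<length secs. v \<in> fst (secs ! i) \<longleftrightarrow> l \<le> i \<and> i \<le> r))) \<and>
     \<comment> \<open>maximal cliques in bijection with descending paths\<close>
     distinct (cliques T) \<and> set (cliques T) = max_cliques V E \<and>
     \<comment> \<open>clique orders\<close>
     {cliques T' | T'. variant T T'} =
        {L. distinct L \<and> set L = max_cliques V E \<and> (\<forall>v\<in>V. consecutive L v)} \<and>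
     \<comment> \<open>(a)--(f)\<close>
     (\<forall>p secs. sub T p = Some (QNode secs) \<longrightarrow> Q_conditions secs) \<and>
     \<comment> \<open>(g)\<close>
     (\<forall>p i ts us. sub T p = Some (PNode {} ts) \<longrightarrow> sub T (p @ [i]) \<noteq> Some (PNode {} us)) \<and>
     \<comment> \<open>(h)\<close>
     (\<forall>p S t. sub T p \<noteq> Some (PNode S [t]) \<or> \<not> is_P t)"
     \<comment> \<open>(i) holds by construction: children of P-nodes are trees\<close>

definition node :: "mpq \<Rightarrow> nat \<Rightarrow> nat list" where
  "node T v = (THE p. \<exists>t. sub T p = Some t \<and> v \<in> node_verts t)"

text \<open>0-based l(v), r(v) for a vertex of a Q-node.\<close>
definition lpos :: "mpq \<Rightarrow> nat \<Rightarrow> nat" where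
  "lpos T v = (case the (sub T (node T v)) of QNode secs \<Rightarrow> (LEAST i. v \<in> fst (secs ! i)) | _ \<Rightarrow> 0)"

definition rpos :: "mpq \<Rightarrow> nat \<Rightarrow> nat" where
  "rpos T v = (case the (sub T (node T v)) of
                 QNode secs \<Rightarrow> (GREATEST i. i < length secs \<and> v \<in> fst (secs ! i)) | _ \<Rightarrow> 0)"

text \<open>x is over y: node(x) is the lowest common ancestor of node(x) and node(y).\<close>
definition over :: "mpq \<Rightarrow> nat \<Rightarrow> nat \<Rightarrow> bool" where
  "over T x y \<longleftrightarrow> (\<exists>q. node T y = node T x @ q)"

text \<open>The tree path node(x)=n_1,...,n_t=node(y) consists of the prefixes of node(y)
  of length between length(node x) and length(node y); n_{i+1} is in T_a where a
  is the next path entry.\<close>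
definition through_central :: "mpq \<Rightarrow> nat \<Rightarrow> nat \<Rightarrow> bool" where
  "through_central T x y \<longleftrightarrow>
     (\<exists>m secs. length (node T x) < m \<and> m < length (node T y) \<and>
        sub T (take m (node T y)) = Some (QNode secs) \<and>
        0 < node T y ! m \<and> node T y ! m < length secs - 1)"

definition ends_in_P_leaf :: "mpq \<Rightarrow> nat \<Rightarrow> bool" where
  "ends_in_P_leaf T y \<longleftrightarrow> (\<exists>S. sub T (node T y) = Some (PNode S []))"

definition starts_in_P :: "mpq \<Rightarrow> nat \<Rightarrow> bool" where
  "starts_in_P T x \<longleftrightarrow> (\<exists>S ts. sub T (node T x) = Some (PNode S ts))"

definition starts_non_central :: "mpq \<Rightarrow> nat \<Rightarrow> nat \<Rightarrow> bool" where
  "starts_non_central T x y \<longleftrightarrow>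
     (\<exists>secs. sub T (node T x) = Some (QNode secs) \<and>
        (node T y ! length (node T x) = lpos T x \<or> node T y ! length (node T x) = rpos T x))"

definition almost_rotable :: "mpq \<Rightarrow> nat \<Rightarrow> nat \<Rightarrow> bool" where
  "almost_rotable T x y \<longleftrightarrow> \<not> through_central T x y \<and> ends_in_P_leaf T y"

definition rotable :: "mpq \<Rightarrow> nat \<Rightarrow> nat \<Rightarrow> bool" where
  "rotable T x y \<longleftrightarrow> almost_rotable T x y \<and> (starts_in_P T x \<or> starts_non_central T x y)"

end

theory Submission
  imports Defs
begin


definition loc :: "mpq \<Rightarrow> nat \<Rightarrow> nat list \<Rightarrow> bool" where
  "loc t v p \<longleftrightarrow> (\<exists>t0. sub t p = Some t0 \<and> v \<in> node_verts t0)"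

lemma sub_append: "sub t (p @ q) = (case sub t p of None \<Rightarrow> None | Some u \<Rightarrow> sub u q)"
proof (induction p arbitrary: t)
  case Nil then show ?case by simp
next
  case (Cons i p)
  show ?case
  proof (cases t)
    case (PNode S ts) then show ?thesis using Cons by simp
  next
    case (QNode secs) then show ?thesis using Cons by (simp split: option.split)
  qed
qed

lemma variant_refl: "variant t t"
proof (induction t)
  case (PNode S ts)
  then show ?case by (auto intro!: var_P list.rel_refl_strong)
next
  case (QNode secs)
  then show ?case
    by (auto intro!: var_Q list.rel_refl_strong option.rel_refl_strong)
qed

lemma loc_P: "j < length ts \<Longrightarrow> loc (ts ! j) v p \<Longrightarrow> loc (PNode S ts) v (j # p)"
  by (simp add: loc_def)

lemma loc_Q: "j < length secs \<Longrightarrow> snd (secs ! j) = Some u \<Longrightarrow> loc u v p \<Longrightarrow> loc (QNode secs) v (j # p)"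
  by (simp add: loc_def)

lemma loc_root: "v \<in> node_verts t \<Longrightarrow> loc t v []"
  by (simp add: loc_def)

lemma cliques_sub: "c \<in> set (cliques t) \<Longrightarrow> v \<in> c \<Longrightarrow> \<exists>p. loc t v p"
proof (induction t arbitrary: c)
  case (PNode S ts)
  show ?case
  proof (cases "ts = []")
    case True then show ?thesis using PNode.prems by (auto intro!: exI[of _ "[]"] simp: loc_def)
  next
    case False
    then obtain u c' where u: "u \<in> set ts" "c' \<in> set (cliques u)" "c = S \<union> c'"
      using PNode.prems by auto
    show ?thesis
    proof (cases "v \<in> S")
      case True then show ?thesis by (auto intro!: exI[of _ "[]"] simp: loc_def)
    next
      case False
      with u PNode.prems have "v \<in> c'" by auto
      with PNode.IH u obtain p where "loc u v p" by blast
      moreover from u obtain j where "j < length ts" "u = ts ! j" by (auto simp: in_set_conv_nth)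
      ultimately show ?thesis by (blast intro: loc_P)
    qed
  qed
next
  case (QNode secs)
  from QNode.prems obtain st where st: "st \<in> set secs"
    "c \<in> set (case snd st of None \<Rightarrow> [fst st] | Some t \<Rightarrow> map ((\<union>) (fst st)) (cliques t))" by auto
  from st obtain j where j: "j < length secs" "st = secs ! j" by (auto simp: in_set_conv_nth)
  show ?case
  proof (cases "v \<in> fst st")
    case True
    then have "v \<in> node_verts (QNode secs)" using j by auto
    then show ?thesis by (blast intro: loc_root)
  next
    case False
    then obtain u c' where u: "snd st = Some u" "c' \<in> set (cliques u)" "v \<in> c'"
      using st QNode.prems by (auto split: option.splits)
    have "Some u \<in> Basic_BNFs.snds st" using u by (cases st) auto
    with QNode.IH st u obtain p where "loc u v p" by fastforce
    then show ?thesis using j u by (blast intro: loc_Q)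
  qed
qed

definition qg :: "nat set \<times> mpq option \<Rightarrow> nat set list" where
  "qg st = (case snd st of None \<Rightarrow> [fst st] | Some t \<Rightarrow> map ((\<union>) (fst st)) (cliques t))"

lemma cliques_Q: "cliques (QNode secs) = concat (map qg secs)"
  unfolding cliques.simps by (rule arg_cong[where f=concat], rule map_cong) (simp_all add: qg_def)

lemma qg_mem: "c \<in> set (concat (map qg xs)) \<Longrightarrow> v \<in> c \<Longrightarrow>
   \<exists>st\<in>set xs. v \<in> fst st \<or> (\<exists>u p. snd st = Some u \<and> loc u v p)"
proof -
  assume c: "c \<in> set (concat (map qg xs))" and v: "v \<in> c"
  then obtain st where st: "st \<in> set xs" "c \<in> set (qg st)" by auto
  show ?thesis
  proof (cases "snd st")
    case None then show ?thesis using st v by (auto simp: qg_def)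
  next
    case (Some u)
    then obtain c' where "c = fst st \<union> c'" "c' \<in> set (cliques u)" using st by (auto simp: qg_def)
    then show ?thesis
    proof (cases "v \<in> fst st")
      case False
      with \<open>c = fst st \<union> c'\<close> v have "v \<in> c'" by auto
      from cliques_sub[OF \<open>c' \<in> set (cliques u)\<close> this] obtain p where "loc u v p" by blast
      then show ?thesis using st(1) Some by blast
    qed (use st(1) in blast)
  qed
qed

lemma set_take_drop_nth: "st \<in> set (take i xs) \<or> st \<in> set (drop (Suc i) xs) \<Longrightarrow>
   \<exists>j<length xs. j \<noteq> i \<and> st = xs ! j"
proof -
  assume "st \<in> set (take i xs) \<or> st \<in> set (drop (Suc i) xs)"
  then show ?thesis
  proof
    assume "st \<in> set (take i xs)"
    then obtain j where "j < length (take i xs)" "st = take i xs ! j" by (auto simp: in_set_conv_nth)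
    then show ?thesis by (intro exI[of _ j]) auto
  next
    assume "st \<in> set (drop (Suc i) xs)"
    then obtain j where "j < length (drop (Suc i) xs)" "st = drop (Suc i) xs ! j" by (auto simp: in_set_conv_nth)
    then show ?thesis by (intro exI[of _ "Suc i + j"]) auto
  qed
qed

definition noprefix :: "nat list \<Rightarrow> nat list \<Rightarrow> bool" where
  "noprefix p p' \<longleftrightarrow> \<not> (\<exists>z. p' = p @ z)"

lemma ctx:
  assumes "sub t p = Some s" "variant s s'"
  shows "\<exists>t' pre post U. variant t t' \<and> cliques t' = pre @ map ((\<union>) U) (cliques s') @ post \<and>
     (\<forall>v \<in> U \<union> \<Union>(set (pre @ post)). \<exists>p'. noprefix p p' \<and> loc t v p')"
  using assms
proof (induction p arbitrary: t)
  case Nil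
  then show ?case
    by (intro exI[of _ s'] exI[of _ "[]"] exI[of _ "[]"] exI[of _ "{}"]) (auto simp: variant_refl)
next
  case (Cons i p)
  show ?case
  proof (cases t)
    case (PNode S ts)
    with Cons.prems have i: "i < length ts" and si: "sub (ts ! i) p = Some s" by (auto split: if_splits)
    from Cons.IH[OF si Cons.prems(2)] obtain t1 pre1 post1 U1 where
      IH: "variant (ts ! i) t1" "cliques t1 = pre1 @ map ((\<union>) U1) (cliques s') @ post1"
      "\<forall>v \<in> U1 \<union> \<Union>(set (pre1 @ post1)). \<exists>p'. noprefix p p' \<and> loc (ts ! i) v p'" by blast
    define f where "f = (\<lambda>u. map ((\<union>) S) (cliques u))"
    have ne: "ts[i := t1] \<noteq> []"
      using i by (metis length_0_conv length_list_update not_less0)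
    have eq: "ts[i := t1] = take i ts @ t1 # drop (Suc i) ts" using i by (simp add: upd_conv_take_nth_drop)
    have cl: "cliques (PNode S (ts[i := t1])) =
       (concat (map f (take i ts)) @ map ((\<union>) S) pre1) @ map ((\<union>) (S \<union> U1)) (cliques s') @
       (map ((\<union>) S) post1 @ concat (map f (drop (Suc i) ts)))"
      using ne i unfolding eq by (cases ts) (simp_all add: f_def IH(2) Un_assoc)
    have var: "variant t (PNode S (ts[i := t1]))"
      unfolding PNode
      apply (rule var_P[OF _ refl])
      apply (clarsimp simp: list_all2_conv_all_nth)
      subgoal for k using IH(1) by (cases "k = i") (auto simp: variant_refl)
      done
    have other: "\<exists>p'. noprefix (i # p) p' \<and> loc t v p'"
      if "u \<in> set (take i ts) \<or> u \<in> set (drop (Suc i) ts)" "c \<in> set (cliques u)" "v \<in> c" for u c v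
    proof -
      from set_take_drop_nth[OF that(1)] obtain j where j: "j < length ts" "j \<noteq> i" "u = ts ! j" by blast
      from cliques_sub[OF that(2,3)] obtain p' where "loc u v p'" by blast
      then have "loc t v (j # p')" using j unfolding PNode by (auto intro: loc_P)
      then show ?thesis using j by (auto simp: noprefix_def)
    qed
    have rootS: "\<exists>p'. noprefix (i # p) p' \<and> loc t v p'" if "v \<in> S" for v
      using that unfolding PNode by (intro exI[of _ "[]"]) (auto simp: noprefix_def loc_def)
    have inner: "\<exists>p'. noprefix (i # p) p' \<and> loc t v p'" if "v \<in> U1 \<union> \<Union>(set (pre1 @ post1))" for v
    proof -
      from IH(3) that obtain p' where "noprefix p p'" "loc (ts ! i) v p'" by blast
      then show ?thesis using i unfolding PNode by (intro exI[of _ "i # p'"]) (auto simp: noprefix_def intro: loc_P)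
    qed
    show ?thesis
      apply (rule exI[of _ "PNode S (ts[i := t1])"], rule exI, rule exI, rule exI[of _ "S \<union> U1"])
      apply (rule conjI[OF var], rule conjI[OF cl])
      using other rootS inner by (fastforce simp: f_def)
  next
    case (QNode secs)
    with Cons.prems obtain ti where i: "i < length secs" "snd (secs ! i) = Some ti"
      and si: "sub ti p = Some s" by (auto split: if_splits option.splits)
    from Cons.IH[OF si Cons.prems(2)] obtain t1 pre1 post1 U1 where
      IH: "variant ti t1" "cliques t1 = pre1 @ map ((\<union>) U1) (cliques s') @ post1"
      "\<forall>v \<in> U1 \<union> \<Union>(set (pre1 @ post1)). \<exists>p'. noprefix p p' \<and> loc ti v p'" by blast
    define Si where "Si = fst (secs ! i)"
    define secs' where "secs' = secs[i := (Si, Some t1)]"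
    have eq: "secs' = take i secs @ (Si, Some t1) # drop (Suc i) secs"
      using i by (simp add: secs'_def upd_conv_take_nth_drop)
    have cl: "cliques (QNode secs') =
       (concat (map qg (take i secs)) @ map ((\<union>) Si) pre1) @ map ((\<union>) (Si \<union> U1)) (cliques s') @
       (map ((\<union>) Si) post1 @ concat (map qg (drop (Suc i) secs)))"
      unfolding cliques_Q eq by (simp add: qg_def IH(2) Un_assoc)
    have var: "variant t (QNode secs')"
      unfolding QNode secs'_def
      apply (rule var_Q)
      using i IH(1) by (auto simp: list_all2_conv_all_nth nth_list_update Si_def intro!: option.rel_refl_strong variant_refl)
    have other: "\<exists>p'. noprefix (i # p) p' \<and> loc t v p'"
      if "st \<in> set (take i secs) \<or> st \<in> set (drop (Suc i) secs)"
         "v \<in> fst st \<or> (\<exists>u p. snd st = Some u \<and> loc u v p)" for st v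
    proof -
      from set_take_drop_nth[OF that(1)] obtain j where j: "j < length secs" "j \<noteq> i" "st = secs ! j" by blast
      from that(2) show ?thesis
      proof
        assume "v \<in> fst st"
        then have "v \<in> node_verts t" using j unfolding QNode by auto
        then show ?thesis by (intro exI[of _ "[]"]) (auto simp: noprefix_def loc_def)
      next
        assume "\<exists>u p. snd st = Some u \<and> loc u v p"
        then obtain u p' where "snd st = Some u" "loc u v p'" by blast
        then have "loc t v (j # p')" using j unfolding QNode by (auto intro: loc_Q)
        then show ?thesis using j by (auto simp: noprefix_def)
      qed
    qed
    have rootS: "\<exists>p'. noprefix (i # p) p' \<and> loc t v p'" if "v \<in> Si" for v
    proof -
      have "v \<in> node_verts t" using that i unfolding QNode Si_def by auto
      then show ?thesis by (intro exI[of _ "[]"]) (auto simp: noprefix_def loc_def)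
    qed
    have inner: "\<exists>p'. noprefix (i # p) p' \<and> loc t v p'" if "v \<in> U1 \<union> \<Union>(set (pre1 @ post1))" for v
    proof -
      from IH(3) that obtain p' where "noprefix p p'" "loc ti v p'" by blast
      then show ?thesis using i unfolding QNode by (intro exI[of _ "i # p'"]) (auto simp: noprefix_def intro: loc_Q)
    qed
    have other2: "\<exists>p'. noprefix (i # p) p' \<and> loc t v p'"
      if "c \<in> set (concat (map qg (take i secs))) \<or> c \<in> set (concat (map qg (drop (Suc i) secs)))" "v \<in> c" for c v
      using that qg_mem other by blast
    show ?thesis
      apply (rule exI[of _ "QNode secs'"], rule exI, rule exI, rule exI[of _ "Si \<union> U1"])
      apply (rule conjI[OF var], rule conjI[OF cl])
      using other2 rootS inner by fastforce
  qed
qed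

lemma arr:
  assumes "sub t r = Some (PNode S [])"
    and "\<forall>m<length r. \<forall>secs. sub t (take m r) = Some (QNode secs) \<longrightarrow> \<not> (0 < r ! m \<and> r ! m < length secs - 1)"
  shows "\<exists>t' C rest. variant t t' \<and> cliques t' = C # rest \<and> S \<subseteq> C \<and>
     (\<forall>S0 ts. t = PNode S0 ts \<longrightarrow> S0 \<subseteq> C) \<and> (\<forall>c\<in>set rest. \<forall>v\<in>c. \<exists>p'. p' \<noteq> r \<and> loc t v p')"
  using assms
proof (induction r arbitrary: t)
  case Nil
  then show ?case
    by (intro exI[of _ t] exI[of _ S] exI[of _ "[]"]) (auto simp: variant_refl)
next
  case (Cons i r)
  have cond: "\<forall>m<length r. \<forall>secs. sub u (take m r) = Some (QNode secs) \<longrightarrow> \<not> (0 < r ! m \<and> r ! m < length secs - 1)"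
    if "\<And>q. sub t (i # q) = sub u q" for u
  proof (intro allI impI)
    fix m secs assume "m < length r" "sub u (take m r) = Some (QNode secs)"
    then show "\<not> (0 < r ! m \<and> r ! m < length secs - 1)"
      using Cons.prems(2)[rule_format, of "Suc m" secs] that[of "take m r"] by simp
  qed
  show ?case
  proof (cases t)
    case (PNode S0 ts)
    with Cons.prems have i: "i < length ts" and si: "sub (ts ! i) r = Some (PNode S [])" by (auto split: if_splits)
    have c2: "\<forall>m<length r. \<forall>secs. sub (ts ! i) (take m r) = Some (QNode secs) \<longrightarrow> \<not> (0 < r ! m \<and> r ! m < length secs - 1)"
      by (rule cond) (simp add: PNode i)
    from Cons.IH[OF si c2] obtain t1 C1 rest1 where
      IH: "variant (ts ! i) t1" "cliques t1 = C1 # rest1" "S \<subseteq> C1"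
      "\<forall>c\<in>set rest1. \<forall>v\<in>c. \<exists>p'. p' \<noteq> r \<and> loc (ts ! i) v p'" by blast
    define f where "f = (\<lambda>u. map ((\<union>) S0) (cliques u))"
    define ws where "ws = t1 # (take i ts @ drop (Suc i) ts)"
    have eq: "ts[i := t1] = take i ts @ t1 # drop (Suc i) ts" using i by (simp add: upd_conv_take_nth_drop)
    have cl: "cliques (PNode S0 ws) = (S0 \<union> C1) # (map ((\<union>) S0) rest1 @ concat (map f (take i ts @ drop (Suc i) ts)))"
      by (simp add: ws_def f_def IH(2))
    have var: "variant t (PNode S0 ws)"
      unfolding PNode
      apply (rule var_P[of _ "ts[i := t1]"])
       apply (clarsimp simp: list_all2_conv_all_nth)
      subgoal for k using IH(1) by (cases "k = i") (auto simp: variant_refl)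
      unfolding eq ws_def by simp
    have other: "\<exists>p'. p' \<noteq> i # r \<and> loc t v p'"
      if "u \<in> set (take i ts) \<or> u \<in> set (drop (Suc i) ts)" "c \<in> set (cliques u)" "v \<in> c" for u c v
    proof -
      from set_take_drop_nth[OF that(1)] obtain j where j: "j < length ts" "j \<noteq> i" "u = ts ! j" by blast
      from cliques_sub[OF that(2,3)] obtain p' where "loc u v p'" by blast
      then have "loc t v (j # p')" using j unfolding PNode by (auto intro: loc_P)
      then show ?thesis using j by auto
    qed
    have rootS: "\<exists>p'. p' \<noteq> i # r \<and> loc t v p'" if "v \<in> S0" for v
      using that unfolding PNode by (intro exI[of _ "[]"]) (auto simp: loc_def)
    have inner: "\<exists>p'. p' \<noteq> i # r \<and> loc t v p'" if "c \<in> set rest1" "v \<in> c" for c v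
    proof -
      from IH(4) that obtain p' where "p' \<noteq> r" "loc (ts ! i) v p'" by blast
      then show ?thesis using i unfolding PNode by (intro exI[of _ "i # p'"]) (auto intro: loc_P)
    qed
    have fin: "\<forall>c\<in>set (map ((\<union>) S0) rest1 @ concat (map f (take i ts @ drop (Suc i) ts))). \<forall>v\<in>c. \<exists>p'. p' \<noteq> i # r \<and> loc t v p'"
    proof (intro ballI)
      fix c v assume c: "c \<in> set (map ((\<union>) S0) rest1 @ concat (map f (take i ts @ drop (Suc i) ts)))" and v: "v \<in> c"
      show "\<exists>p'. p' \<noteq> i # r \<and> loc t v p'"
      proof (cases "c \<in> set (map ((\<union>) S0) rest1)")
        case True
        then obtain c' where "c' \<in> set rest1" "c = S0 \<union> c'" by auto
        then show ?thesis using v rootS inner by blast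
      next
        case False
        with c obtain u c' where "u \<in> set (take i ts) \<or> u \<in> set (drop (Suc i) ts)" "c' \<in> set (cliques u)" "c = S0 \<union> c'"
          by (auto simp: f_def)
        then show ?thesis using v rootS other by blast
      qed
    qed
    have "\<forall>S1 ts1. t = PNode S1 ts1 \<longrightarrow> S1 \<subseteq> S0 \<union> C1" using PNode by auto
    then show ?thesis using var cl fin IH(3) by blast
  next
    case (QNode secs)
    with Cons.prems obtain ti where i: "i < length secs" "snd (secs ! i) = Some ti"
      and si: "sub ti r = Some (PNode S [])" by (auto split: if_splits option.splits)
    have c2: "\<forall>m<length r. \<forall>secs. sub ti (take m r) = Some (QNode secs) \<longrightarrow> \<not> (0 < r ! m \<and> r ! m < length secs - 1)"
      by (rule cond) (simp add: QNode i)
    from Cons.prems(2)[rule_format, of 0 secs] QNode i have iend: "i = 0 \<or> i = length secs - 1" by auto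
    from Cons.IH[OF si c2] obtain t1 C1 rest1 where
      IH: "variant ti t1" "cliques t1 = C1 # rest1" "S \<subseteq> C1"
      "\<forall>c\<in>set rest1. \<forall>v\<in>c. \<exists>p'. p' \<noteq> r \<and> loc ti v p'" by blast
    define Si where "Si = fst (secs ! i)"
    have var0: "list_all2 (\<lambda>a b. fst a = fst b \<and> rel_option variant (snd a) (snd b)) secs (secs[i := (Si, Some t1)])"
      using i IH(1) by (auto simp: list_all2_conv_all_nth nth_list_update Si_def intro!: option.rel_refl_strong variant_refl)
    have eq: "secs[i := (Si, Some t1)] = take i secs @ (Si, Some t1) # drop (Suc i) secs"
      using i by (simp add: upd_conv_take_nth_drop)
    have other: "\<exists>p'. p' \<noteq> i # r \<and> loc t v p'"
      if "st \<in> set (take i secs) \<or> st \<in> set (drop (Suc i) secs)"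
         "v \<in> fst st \<or> (\<exists>u p. snd st = Some u \<and> loc u v p)" for st v
    proof -
      from set_take_drop_nth[OF that(1)] obtain j where j: "j < length secs" "j \<noteq> i" "st = secs ! j" by blast
      from that(2) show ?thesis
      proof
        assume "v \<in> fst st"
        then have "v \<in> node_verts t" using j unfolding QNode by auto
        then show ?thesis by (intro exI[of _ "[]"]) (auto simp: loc_def)
      next
        assume "\<exists>u p. snd st = Some u \<and> loc u v p"
        then obtain u p' where "snd st = Some u" "loc u v p'" by blast
        then have "loc t v (j # p')" using j unfolding QNode by (auto intro: loc_Q)
        then show ?thesis using j by auto
      qed
    qed
    have rootS: "\<exists>p'. p' \<noteq> i # r \<and> loc t v p'" if "v \<in> Si" for v
    proof -
      have "v \<in> node_verts t" using that i unfolding QNode Si_def by auto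
      then show ?thesis by (intro exI[of _ "[]"]) (auto simp: loc_def)
    qed
    have inner: "\<exists>p'. p' \<noteq> i # r \<and> loc t v p'" if "c \<in> set rest1" "v \<in> c" for c v
    proof -
      from IH(4) that obtain p' where "p' \<noteq> r" "loc ti v p'" by blast
      then show ?thesis using i unfolding QNode by (intro exI[of _ "i # p'"]) (auto intro: loc_Q)
    qed
    show ?thesis
    proof (cases "i = 0")
      case True
      have cl: "cliques (QNode (secs[i := (Si, Some t1)])) = (Si \<union> C1) # (map ((\<union>) Si) rest1 @ concat (map qg (drop (Suc i) secs)))"
        unfolding cliques_Q eq using True by (simp add: qg_def IH(2))
      have other2: "\<exists>p'. p' \<noteq> i # r \<and> loc t v p'"
        if "c \<in> set (concat (map qg (drop (Suc i) secs)))" "v \<in> c" for c v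
        using that qg_mem other by blast
      have fin: "\<forall>c\<in>set (map ((\<union>) Si) rest1 @ concat (map qg (drop (Suc i) secs))). \<forall>v\<in>c. \<exists>p'. p' \<noteq> i # r \<and> loc t v p'"
      proof (intro ballI)
        fix c v assume c: "c \<in> set (map ((\<union>) Si) rest1 @ concat (map qg (drop (Suc i) secs)))" and v: "v \<in> c"
        show "\<exists>p'. p' \<noteq> i # r \<and> loc t v p'"
        proof (cases "c \<in> set (map ((\<union>) Si) rest1)")
          case True
          then obtain c' where "c' \<in> set rest1" "c = Si \<union> c'" by auto
          then show ?thesis using v rootS inner by blast
        next
          case False
          with c v show ?thesis using other2 by auto
        qed
      qed
      have var: "variant t (QNode (secs[i := (Si, Some t1)]))" unfolding QNode by (rule var_Q[OF var0])
      have "\<forall>S1 ts1. t = PNode S1 ts1 \<longrightarrow> S1 \<subseteq> Si \<union> C1" using QNode by auto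
      then show ?thesis using var cl fin IH(3) by blast
    next
      case False
      with iend i have il: "Suc i = length secs" by auto
      have cl: "cliques (QNode (rev (secs[i := (Si, Some t1)]))) = (Si \<union> C1) # (map ((\<union>) Si) rest1 @ concat (map qg (rev (take i secs))))"
        unfolding cliques_Q eq using il by (simp add: qg_def IH(2))
      have other2: "\<exists>p'. p' \<noteq> i # r \<and> loc t v p'"
        if "c \<in> set (concat (map qg (rev (take i secs))))" "v \<in> c" for c v
      proof -
        from qg_mem[OF that] obtain st where "st \<in> set (rev (take i secs))"
          "v \<in> fst st \<or> (\<exists>u p. snd st = Some u \<and> loc u v p)" by blast
        then show ?thesis using other[of st v] by auto
      qed
      have fin: "\<forall>c\<in>set (map ((\<union>) Si) rest1 @ concat (map qg (rev (take i secs)))). \<forall>v\<in>c. \<exists>p'. p' \<noteq> i # r \<and> loc t v p'"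
      proof (intro ballI)
        fix c v assume c: "c \<in> set (map ((\<union>) Si) rest1 @ concat (map qg (rev (take i secs))))" and v: "v \<in> c"
        show "\<exists>p'. p' \<noteq> i # r \<and> loc t v p'"
        proof (cases "c \<in> set (map ((\<union>) Si) rest1)")
          case True
          then obtain c' where "c' \<in> set rest1" "c = Si \<union> c'" by auto
          then show ?thesis using v rootS inner by blast
        next
          case False
          with c v show ?thesis using other2 by auto
        qed
      qed
      have var: "variant t (QNode (rev (secs[i := (Si, Some t1)])))" unfolding QNode by (rule var_Qrev[OF var0])
      have "\<forall>S1 ts1. t = PNode S1 ts1 \<longrightarrow> S1 \<subseteq> Si \<union> C1" using QNode by auto
      then show ?thesis using var cl fin IH(3) by blast
    qed
  qed
qed



lemma maxext:
  assumes "finite V" "clique V E C"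
  shows "\<exists>M\<in>max_cliques V E. C \<subseteq> M"
proof -
  let ?P = "\<lambda>D. clique V E D \<and> C \<subseteq> D"
  have bnd: "\<forall>D. ?P D \<longrightarrow> card D \<le> card V"
    using assms(1) by (auto simp: clique_def intro: card_mono)
  obtain D where D: "?P D" "\<forall>D'. ?P D' \<longrightarrow> card D' \<le> card D"
    using ex_has_greatest_nat[of ?P C card "Suc (card V)"] assms(2) bnd by (metis le_imp_less_Suc order_refl)
  have "D \<in> max_cliques V E"
  proof -
    have "\<not> (\<exists>C'. clique V E C' \<and> D \<subset> C')"
    proof
      assume "\<exists>C'. clique V E C' \<and> D \<subset> C'"
      then obtain C' where C': "clique V E C'" "D \<subset> C'" by blast
      then have "finite C'" using assms(1) by (auto simp: clique_def intro: finite_subset)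
      then have "card D < card C'" using C'(2) by (rule psubset_card_mono)
      moreover have "?P C'" using C' D(1) by auto
      ultimately show False using D(2) by fastforce
    qed
    then show ?thesis using D(1) by (simp add: max_cliques_def)
  qed
  then show ?thesis using D(1) by blast
qed

lemma aux14: "real m - 1/4 \<le> real n \<longleftrightarrow> m \<le> n"
proof
  assume h: "real m - 1/4 \<le> real n"
  show "m \<le> n"
  proof (rule ccontr)
    assume "\<not> m \<le> n"
    then have "real (Suc n) \<le> real m" by simp
    then show False using h by simp
  qed
qed simp

lemma interval_from_order:
  assumes sg: "simple_graph V E"
    and L: "distinct L" "set L = max_cliques V E" "\<forall>v\<in>V. consecutive L v"
    and xy: "x \<in> V" "y \<in> V" "x \<noteq> y"
    and i0: "i0 < length L" "\<forall>k<length L. y \<in> L ! k \<longleftrightarrow> k = i0" "x \<in> L ! i0"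
       "0 < i0 \<longrightarrow> x \<notin> L ! (i0 - 1)"
  shows "interval_graph V (E - {{x, y}})"
proof -
  have fin: "finite V" using sg by (simp add: simple_graph_def)
  have inL: "\<exists>k<length L. v \<in> L ! k" if "v \<in> V" for v
  proof -
    have "clique V E {v}" using that by (simp add: clique_def)
    from maxext[OF fin this] obtain M where "M \<in> set L" "v \<in> M" using L(2) by auto
    then show ?thesis by (auto simp: in_set_conv_nth)
  qed
  have ex: "\<exists>lh. fst lh \<le> snd lh \<and> snd lh < length L \<and> (\<forall>k<length L. v \<in> L ! k \<longleftrightarrow> fst lh \<le> k \<and> k \<le> snd lh)"
    if "v \<in> V" for v
  proof -
    from L(3) that obtain i j where ij: "\<forall>k<length L. v \<in> L ! k \<longleftrightarrow> i \<le> k \<and> k \<le> j"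
      unfolding consecutive_def by blast
    from inL[OF that] obtain k0 where k0: "k0 < length L" "v \<in> L ! k0" by blast
    show ?thesis
      apply (rule exI[of _ "(i, min j (length L - 1))"])
      using ij k0 by auto
  qed
  have "\<forall>v\<in>V. \<exists>lh. fst lh \<le> snd lh \<and> snd lh < length L \<and> (\<forall>k<length L. v \<in> L ! k \<longleftrightarrow> fst lh \<le> k \<and> k \<le> snd lh)"
    using ex by blast
  then have "\<exists>lh. \<forall>v\<in>V. fst (lh v) \<le> snd (lh v) \<and> snd (lh v) < length L \<and>
      (\<forall>k<length L. v \<in> L ! k \<longleftrightarrow> fst (lh v) \<le> k \<and> k \<le> snd (lh v))"
    by (rule bchoice)
  then obtain lh where lh: "\<forall>v\<in>V. fst (lh v) \<le> snd (lh v) \<and> snd (lh v) < length L \<and>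
      (\<forall>k<length L. v \<in> L ! k \<longleftrightarrow> fst (lh v) \<le> k \<and> k \<le> snd (lh v))"
    by blast
  define lo where "lo v = fst (lh v)" for v
  define hi where "hi v = snd (lh v)" for v
  have lohi: "lo v \<le> hi v" "hi v < length L" "\<And>k. k < length L \<Longrightarrow> v \<in> L ! k \<longleftrightarrow> lo v \<le> k \<and> k \<le> hi v"
    if "v \<in> V" for v using lh that by (auto simp: lo_def hi_def)
  have edge: "{u, v} \<in> E \<longleftrightarrow> lo u \<le> hi v \<and> lo v \<le> hi u" if "u \<in> V" "v \<in> V" "u \<noteq> v" for u v
  proof
    assume e: "{u, v} \<in> E"
    have "clique V E {u, v}" using that e by (auto simp: clique_def insert_commute)
    from maxext[OF fin this] obtain M where "M \<in> set L" "{u, v} \<subseteq> M" using L(2) by auto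
    then obtain k where "k < length L" "u \<in> L ! k" "v \<in> L ! k" by (auto simp: in_set_conv_nth)
    then show "lo u \<le> hi v \<and> lo v \<le> hi u" using lohi[OF that(1)] lohi[OF that(2)] by auto
  next
    assume h: "lo u \<le> hi v \<and> lo v \<le> hi u"
    define k where "k = max (lo u) (lo v)"
    have k: "k < length L" using h lohi[OF that(1)] lohi[OF that(2)] by (auto simp: k_def)
    have "u \<in> L ! k" "v \<in> L ! k" using h k lohi[OF that(1)] lohi[OF that(2)] by (auto simp: k_def)
    moreover have "L ! k \<in> max_cliques V E" using L(2) k by auto
    ultimately show "{u, v} \<in> E" using that by (auto simp: max_cliques_def clique_def)
  qed
  have y1: "y \<in> L ! (lo y)" "y \<in> L ! (hi y)" "lo y < length L"
    using lohi(3)[OF xy(2), of "lo y"] lohi(3)[OF xy(2), of "hi y"] lohi(1,2)[OF xy(2)] by auto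
  have loy: "lo y = i0" "hi y = i0" using y1 i0(2) lohi(2)[OF xy(2)] by auto
  have lox: "lo x = i0"
  proof -
    have a: "lo x \<le> i0" "i0 \<le> hi x" using lohi(3)[OF xy(1) i0(1)] i0(3) by auto
    show ?thesis
    proof (rule ccontr)
      assume "lo x \<noteq> i0"
      then have "lo x \<le> i0 - 1" "0 < i0" using a by auto
      then have "x \<in> L ! (i0 - 1)" using lohi(3)[OF xy(1), of "i0 - 1"] a i0(1) by auto
      then show False using i0(4) \<open>0 < i0\<close> by blast
    qed
  qed
  define a where "a w = (if w = y then real i0 - 1/4 else if w \<noteq> x \<and> lo w = i0 then real i0 - 1/4 else real (lo w))" for w
  define b where "b w = (if w = y then real i0 - 1/4 else real (hi w))" for w
  have ab: "a w = real (lo w) \<or> a w = real (lo w) - 1/4" "b w = real (hi w)" if "w \<noteq> y" for w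
    using that by (auto simp: a_def b_def)
  have ay: "a y = real i0 - 1/4" "b y = real i0 - 1/4" by (auto simp: a_def b_def)
  have ax: "a x = real i0" using lox xy(3) by (auto simp: a_def)
  have key: "{u, v} \<in> E - {{x, y}} \<longleftrightarrow> max (a u) (a v) \<le> min (b u) (b v)"
    if uv: "u \<in> V" "v \<in> V" "u \<noteq> v" and uy: "u \<noteq> y" for u v
  proof (cases "v = y")
    case True
    show ?thesis
    proof (cases "u = x")
      case True
      then show ?thesis using \<open>v = y\<close> ax ay by auto
    next
      case False
      have "{u, v} \<in> E \<longleftrightarrow> lo u \<le> i0 \<and> i0 \<le> hi u" using edge[OF uv] loy \<open>v = y\<close> by auto
      moreover have "{u, v} \<noteq> {x, y}" using False uy by (auto simp: doubleton_eq_iff)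
      moreover have "a u \<le> real i0 - 1/4 \<longleftrightarrow> lo u \<le> i0"
        using False uy by (auto simp: a_def)
      moreover have "real i0 - 1/4 \<le> b u \<longleftrightarrow> i0 \<le> hi u" using ab(2)[OF uy] aux14 by simp
      ultimately show ?thesis using \<open>v = y\<close> ay by auto
    qed
  next
    case False
    have ne: "{u, v} \<noteq> {x, y}" using False uy by (auto simp: doubleton_eq_iff)
    have "a u \<le> b v \<longleftrightarrow> lo u \<le> hi v" using ab[OF uy] ab[OF False] aux14 by auto
    moreover have "a v \<le> b u \<longleftrightarrow> lo v \<le> hi u" using ab[OF uy] ab[OF False] aux14 by auto
    moreover have "a u \<le> b u" "a v \<le> b v" using ab[OF uy] ab[OF False] lohi(1)[OF uv(1)] lohi(1)[OF uv(2)] by auto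
    ultimately show ?thesis using edge[OF uv] ne by auto
  qed
  have key2: "{u, v} \<in> E - {{x, y}} \<longleftrightarrow> max (a u) (a v) \<le> min (b u) (b v)"
    if uv: "u \<in> V" "v \<in> V" "u \<noteq> v" for u v
  proof (cases "u = y")
    case True
    then have "v \<noteq> y" using uv by auto
    from key[OF uv(2,1) _ this] uv(3) show ?thesis by (simp add: insert_commute max.commute min.commute)
  next
    case False
    then show ?thesis using key[OF uv] by simp
  qed
  have sg2: "simple_graph V (E - {{x, y}})" using sg by (auto simp: simple_graph_def)
  have "\<forall>v\<in>V. a v \<le> b v"
  proof
    fix v assume "v \<in> V"
    show "a v \<le> b v"
    proof (cases "v = y")
      case True then show ?thesis using ay by simp
    next
      case False then show ?thesis using ab[OF False] lohi(1)[OF \<open>v \<in> V\<close>] by auto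
    qed
  qed
  then show ?thesis unfolding interval_graph_def using sg2 key2 by blast
qed



lemma finish_idx:
  assumes "L = P1 @ Cc # R1" "y \<in> Cc" "x \<in> Cc" "\<forall>c\<in>set P1 \<union> set R1. y \<notin> c"
    "P1 \<noteq> [] \<longrightarrow> x \<notin> last P1"
  shows "length P1 < length L \<and> (\<forall>k<length L. y \<in> L ! k \<longleftrightarrow> k = length P1) \<and> x \<in> L ! (length P1) \<and>
    (0 < length P1 \<longrightarrow> x \<notin> L ! (length P1 - 1))"
proof (intro conjI allI impI)
  show "length P1 < length L" using assms(1) by simp
  show "x \<in> L ! length P1" using assms(1,3) by simp
  fix k assume k: "k < length L"
  show "y \<in> L ! k \<longleftrightarrow> k = length P1"
  proof (cases "k < length P1")
    case True
    then have "L ! k \<in> set P1" using assms(1) by (simp add: nth_append)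
    then show ?thesis using assms(4) True by auto
  next
    case False
    show ?thesis
    proof (cases "k = length P1")
      case True then show ?thesis using assms(1,2) by simp
    next
      case False
      with \<open>\<not> k < length P1\<close> obtain d where d: "k = Suc (length P1 + d)" by (metis add_Suc_right less_imp_Suc_add linorder_neqE_nat)
      then have "L ! k = R1 ! d" "d < length R1" using assms(1) k by (auto simp: nth_append)
      then have "L ! k \<in> set R1" by simp
      then show ?thesis using assms(4) False by auto
    qed
  qed
next
  assume "0 < length P1"
  then have "P1 \<noteq> []" "L ! (length P1 - 1) = last P1" using assms(1) by (auto simp: nth_append last_conv_nth)
  then show "x \<notin> L ! (length P1 - 1)" using assms(5) by simp
qed

lemma loc_append: "sub T q = Some s \<Longrightarrow> loc s v p \<Longrightarrow> loc T v (q @ p)"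
  by (simp add: loc_def sub_append)

theorem mainTheorem6:
  fixes n :: nat and E :: "nat set set" and T :: mpq and x y :: nat
  assumes "interval_graph {1..n} E"
    and "MPQ_tree {1..n} E T"
    and "{x, y} \<in> E"
    and "over T x y"
    and "node T x \<noteq> node T y"
    and "rotable T x y"
  shows "interval_edge {1..n} E x y"
proof -
  define V where "V = {1..n}"
  have sg: "simple_graph V E" using assms(1) by (simp add: interval_graph_def V_def)
  have xyV: "x \<in> V" "y \<in> V" "x \<noteq> y"
  proof -
    from sg assms(3) obtain u v where "u \<noteq> v" "u \<in> V" "v \<in> V" "{x, y} = {u, v}"
      unfolding simple_graph_def by blast
    then show "x \<in> V" "y \<in> V" "x \<noteq> y" by (auto simp: doubleton_eq_iff)
  qed
  note M = assms(2)[unfolded MPQ_tree_def, folded V_def]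
  have M2: "\<forall>v\<in>V. \<exists>!p. \<exists>t. sub T p = Some t \<and> v \<in> node_verts t"
    using M by - (elim conjE, assumption)
  have M3: "\<forall>p secs. sub T p = Some (QNode secs) \<longrightarrow>
        (\<forall>v \<in> node_verts (QNode secs). \<exists>l r. l < r \<and> r < length secs \<and>
            (\<forall>i<length secs. v \<in> fst (secs ! i) \<longleftrightarrow> l \<le> i \<and> i \<le> r))"
    using M by - (elim conjE, assumption)
  have M5: "{cliques T' | T'. variant T T'} =
        {L. distinct L \<and> set L = max_cliques V E \<and> (\<forall>v\<in>V. consecutive L v)}"
    using M by - (elim conjE, assumption)
  have locnode: "loc T v (node T v)" if "v \<in> V" for v
  proof -
    have "\<exists>!p. loc T v p" using M2 that by (simp add: loc_def)
    then show ?thesis unfolding node_def loc_def[symmetric] by (rule theI')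
  qed
  have locuniq: "p = node T v" if "v \<in> V" "loc T v p" for v p
  proof -
    have "\<exists>!p. loc T v p" using M2 that by (simp add: loc_def)
    then show ?thesis using locnode[OF that(1)] that(2) by blast
  qed
  have fin: "interval_graph V (E - {{x, y}})" if "variant T T'" "cliques T' = P1 @ Cc # R1"
    "y \<in> Cc" "x \<in> Cc" "\<forall>c\<in>set P1 \<union> set R1. y \<notin> c" "P1 \<noteq> [] \<longrightarrow> x \<notin> last P1" for T' P1 Cc R1
  proof -
    have "cliques T' \<in> {cliques T' | T'. variant T T'}" using that(1) by blast
    then have L: "distinct (cliques T')" "set (cliques T') = max_cliques V E" "\<forall>v\<in>V. consecutive (cliques T') v"
      unfolding M5 by auto
    from finish_idx[OF that(2-6)] have idx: "length P1 < length (cliques T')"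
      "\<forall>k<length (cliques T'). y \<in> cliques T' ! k \<longleftrightarrow> k = length P1" "x \<in> cliques T' ! length P1"
      "0 < length P1 \<longrightarrow> x \<notin> cliques T' ! (length P1 - 1)" by blast+
    show ?thesis by (rule interval_from_order[OF sg L xyV idx])
  qed
  define q where "q = node T x"
  from assms(4) obtain r0 where r0: "node T y = q @ r0" unfolding over_def q_def by blast
  have r0ne: "r0 \<noteq> []" using r0 assms(5) q_def by auto
  from assms(6) have nc: "\<not> through_central T x y" and leaf: "ends_in_P_leaf T y"
    and st: "starts_in_P T x \<or> starts_non_central T x y"
    by (auto simp: rotable_def almost_rotable_def)
  from leaf obtain Sy where Sy: "sub T (node T y) = Some (PNode Sy [])" by (auto simp: ends_in_P_leaf_def)
  have ySy: "y \<in> Sy" using locnode[OF xyV(2)] Sy by (auto simp: loc_def)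
  from locnode[OF xyV(1)] obtain s where s: "sub T q = Some s" "x \<in> node_verts s"
    by (auto simp: loc_def q_def)
  have subs: "sub s r0 = Some (PNode Sy [])" using Sy s(1) r0 by (simp add: sub_append)
  have ncm: "\<not> (0 < r0 ! m \<and> r0 ! m < length secs - 1)"
    if "0 < m" "m < length r0" "sub s (take m r0) = Some (QNode secs)" for m secs
  proof -
    have "sub T (take (length q + m) (node T y)) = Some (QNode secs)"
      using that s(1) r0 by (simp add: sub_append)
    moreover have "node T y ! (length q + m) = r0 ! m" using r0 by (simp add: nth_append)
    moreover have "length (node T x) < length q + m" "length q + m < length (node T y)"
      using that r0 q_def by auto
    ultimately show ?thesis using nc unfolding through_central_def
      by (metis (no_types, lifting))
  qed
  have yloc: "v \<noteq> y" if "loc T v p" "p \<noteq> node T y" for v p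
    using that locuniq[OF xyV(2)] by blast
  have xloc: "v \<noteq> x" if "loc T v p" "p \<noteq> q" for v p
    using that locuniq[OF xyV(1)] q_def by blast
  have "interval_graph V (E - {{x, y}})"
  proof (cases "starts_in_P T x")
    case True
    then obtain Sx ts where sP: "s = PNode Sx ts" using s(1) q_def by (auto simp: starts_in_P_def)
    have c2: "\<forall>m<length r0. \<forall>secs. sub s (take m r0) = Some (QNode secs) \<longrightarrow> \<not> (0 < r0 ! m \<and> r0 ! m < length secs - 1)"
    proof (intro allI impI)
      fix m secs assume "m < length r0" "sub s (take m r0) = Some (QNode secs)"
      moreover have "m \<noteq> 0" using calculation sP by (cases m) auto
      ultimately show "\<not> (0 < r0 ! m \<and> r0 ! m < length secs - 1)" using ncm by blast
    qed
    from arr[OF subs c2] obtain s1 C rest where A: "variant s s1" "cliques s1 = C # rest" "Sy \<subseteq> C"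
      "\<forall>S0 ts. s = PNode S0 ts \<longrightarrow> S0 \<subseteq> C" "\<forall>c\<in>set rest. \<forall>v\<in>c. \<exists>p'. p' \<noteq> r0 \<and> loc s v p'" by blast
    from ctx[OF s(1) A(1)] obtain T' pre post U where K: "variant T T'"
      "cliques T' = pre @ map ((\<union>) U) (cliques s1) @ post"
      "\<forall>v \<in> U \<union> \<Union>(set (pre @ post)). \<exists>p'. noprefix q p' \<and> loc T v p'" by blast
    have cl: "cliques T' = pre @ (U \<union> C) # (map ((\<union>) U) rest @ post)" using K(2) A(2) by simp
    have outU: "v \<noteq> y \<and> v \<noteq> x" if "v \<in> U \<union> \<Union>(set (pre @ post))" for v
    proof -
      from K(3) that obtain p' where "noprefix q p'" "loc T v p'" by blast
      moreover have "p' \<noteq> node T y" "p' \<noteq> q" using calculation(1) r0 unfolding noprefix_def by auto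
      ultimately show ?thesis using yloc xloc by blast
    qed
    have xs: "x \<in> Sx" using s(2) sP by simp
    have restout: "y \<notin> c" if "c \<in> set rest" for c
    proof
      assume "y \<in> c"
      with A(5) that obtain p' where "p' \<noteq> r0" "loc s y p'" by blast
      then have "loc T y (q @ p')" "q @ p' \<noteq> node T y" using s(1) r0 by (auto intro: loc_append)
      then show False using yloc by blast
    qed
    have "y \<in> U \<union> C" using ySy A(3) by auto
    moreover have "x \<in> U \<union> C" using xs A(4) sP by auto
    moreover have "\<forall>c\<in>set pre \<union> set (map ((\<union>) U) rest @ post). y \<notin> c"
    proof
      fix c assume c: "c \<in> set pre \<union> set (map ((\<union>) U) rest @ post)"
      show "y \<notin> c"
      proof (cases "c \<in> set pre \<or> c \<in> set post")
        case True then show ?thesis using outU[of y] by auto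
      next
        case False
        with c obtain c' where "c = U \<union> c'" "c' \<in> set rest" by auto
        then show ?thesis using outU[of y] restout by auto
      qed
    qed
    moreover have "pre \<noteq> [] \<longrightarrow> x \<notin> last pre"
    proof
      assume "pre \<noteq> []" then have "last pre \<in> set pre" by simp
      then show "x \<notin> last pre" using outU[of x] by auto
    qed
    ultimately show ?thesis using fin[OF K(1) cl] by blast
  next
    case False
    with st obtain secs where sQ: "sub T q = Some (QNode secs)"
      and a: "node T y ! length q = lpos T x \<or> node T y ! length q = rpos T x"
      by (auto simp: starts_non_central_def q_def)
    have s': "s = QNode secs" using sQ s(1) by simp
    from M3 sQ s(2) s' obtain l rr where lr: "l < rr" "rr < length secs"
      "\<forall>i<length secs. x \<in> fst (secs ! i) \<longleftrightarrow> l \<le> i \<and> i \<le> rr" by blast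
    have lpos: "lpos T x = l"
      unfolding lpos_def q_def[symmetric] sQ
      apply simp
      apply (rule Least_equality)
      subgoal using lr by auto
      subgoal for i using lr by (cases "i < length secs") auto
      done
    have rpos: "rpos T x = rr"
      unfolding rpos_def q_def[symmetric] sQ
      apply simp
      apply (rule Greatest_equality)
      using lr by auto
    from r0ne obtain a r1 where ar: "r0 = a # r1" by (cases r0) auto
    have aa: "a = l \<or> a = rr" using a r0 ar lpos rpos by simp
    from subs s' ar obtain ta where ta: "a < length secs" "snd (secs ! a) = Some ta"
      "sub ta r1 = Some (PNode Sy [])" by (auto split: if_splits option.splits)
    have c2: "\<forall>m<length r1. \<forall>secs'. sub ta (take m r1) = Some (QNode secs') \<longrightarrow> \<not> (0 < r1 ! m \<and> r1 ! m < length secs' - 1)"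
    proof (intro allI impI)
      fix m secs' assume m: "m < length r1" "sub ta (take m r1) = Some (QNode secs')"
      have "sub s (take (Suc m) r0) = Some (QNode secs')" using m ta s' ar by simp
      from ncm[OF _ _ this] m ar show "\<not> (0 < r1 ! m \<and> r1 ! m < length secs' - 1)" by simp
    qed
    from arr[OF ta(3) c2] obtain ta1 C rest where A: "variant ta ta1" "cliques ta1 = C # rest" "Sy \<subseteq> C"
      "\<forall>c\<in>set rest. \<forall>v\<in>c. \<exists>p'. p' \<noteq> r1 \<and> loc ta v p'" by blast
    define Sa where "Sa = fst (secs ! a)"
    have xSa: "x \<in> Sa" using aa lr ta(1) by (auto simp: Sa_def)
    have var0: "list_all2 (\<lambda>a b. fst a = fst b \<and> rel_option variant (snd a) (snd b)) secs (secs[a := (Sa, Some ta1)])"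
      using ta A(1) by (auto simp: list_all2_conv_all_nth nth_list_update Sa_def intro!: option.rel_refl_strong variant_refl)
    have eq: "secs[a := (Sa, Some ta1)] = take a secs @ (Sa, Some ta1) # drop (Suc a) secs"
      using ta by (simp add: upd_conv_take_nth_drop)
    have intake: "\<exists>j<a. st = secs ! j" if "st \<in> set (take a secs)" for st
    proof -
      from that obtain j where "j < length (take a secs)" "st = take a secs ! j" by (auto simp: in_set_conv_nth)
      then show ?thesis by (intro exI[of _ j]) auto
    qed
    have indrop: "\<exists>j. a < j \<and> j < length secs \<and> st = secs ! j" if "st \<in> set (drop (Suc a) secs)" for st
    proof -
      from that obtain j where "j < length (drop (Suc a) secs)" "st = drop (Suc a) secs ! j" by (auto simp: in_set_conv_nth)
      then show ?thesis by (intro exI[of _ "Suc a + j"]) auto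
    qed
    obtain AA BB where AB: "variant s (QNode (AA @ (Sa, Some ta1) # BB))"
      "\<forall>st\<in>set AA \<union> set BB. \<exists>j<length secs. j \<noteq> a \<and> st = secs ! j" "\<forall>st\<in>set AA. x \<notin> fst st"
    proof (cases "a = l")
      case True
      have "variant s (QNode (take a secs @ (Sa, Some ta1) # drop (Suc a) secs))"
        unfolding s' eq[symmetric] by (rule var_Q[OF var0])
      moreover have "\<forall>st\<in>set (take a secs) \<union> set (drop (Suc a) secs). \<exists>j<length secs. j \<noteq> a \<and> st = secs ! j"
      proof
        fix st assume "st \<in> set (take a secs) \<union> set (drop (Suc a) secs)"
        then show "\<exists>j<length secs. j \<noteq> a \<and> st = secs ! j" by (intro set_take_drop_nth) simp
      qed
      moreover have "\<forall>st\<in>set (take a secs). x \<notin> fst st"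
      proof
        fix st assume "st \<in> set (take a secs)"
        then obtain j where "j < a" "st = secs ! j" using intake by blast
        then show "x \<notin> fst st" using lr True ta(1) by auto
      qed
      ultimately show ?thesis using that by blast
    next
      case False
      with aa have ar2: "a = rr" by simp
      have "variant s (QNode (rev (drop (Suc a) secs) @ (Sa, Some ta1) # rev (take a secs)))"
      proof -
        have "variant s (QNode (rev (secs[a := (Sa, Some ta1)])))" unfolding s' by (rule var_Qrev[OF var0])
        then show ?thesis unfolding eq by simp
      qed
      moreover have "\<forall>st\<in>set (rev (drop (Suc a) secs)) \<union> set (rev (take a secs)). \<exists>j<length secs. j \<noteq> a \<and> st = secs ! j"
      proof
        fix st assume "st \<in> set (rev (drop (Suc a) secs)) \<union> set (rev (take a secs))"
        then show "\<exists>j<length secs. j \<noteq> a \<and> st = secs ! j" by (intro set_take_drop_nth) auto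
      qed
      moreover have "\<forall>st\<in>set (rev (drop (Suc a) secs)). x \<notin> fst st"
      proof
        fix st assume "st \<in> set (rev (drop (Suc a) secs))"
        then have "st \<in> set (drop (Suc a) secs)" by simp
        then obtain j where "a < j" "j < length secs" "st = secs ! j" using indrop by blast
        then show "x \<notin> fst st" using lr ar2 by auto
      qed
      ultimately show ?thesis using that by blast
    qed
    have clA: "cliques (QNode (AA @ (Sa, Some ta1) # BB)) =
        concat (map qg AA) @ (Sa \<union> C) # (map ((\<union>) Sa) rest @ concat (map qg BB))"
      unfolding cliques_Q by (simp add: qg_def A(2))
    from ctx[OF s(1) AB(1)] obtain T' pre post U where K: "variant T T'"
      "cliques T' = pre @ map ((\<union>) U) (cliques (QNode (AA @ (Sa, Some ta1) # BB))) @ post"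
      "\<forall>v \<in> U \<union> \<Union>(set (pre @ post)). \<exists>p'. noprefix q p' \<and> loc T v p'" by blast
    have outU: "v \<noteq> y \<and> v \<noteq> x" if "v \<in> U \<union> \<Union>(set (pre @ post))" for v
    proof -
      from K(3) that obtain p' where "noprefix q p'" "loc T v p'" by blast
      moreover have "p' \<noteq> node T y" "p' \<noteq> q" using calculation(1) r0 unfolding noprefix_def by auto
      ultimately show ?thesis using yloc xloc by blast
    qed
    have cl: "cliques T' = (pre @ map ((\<union>) U) (concat (map qg AA))) @ (U \<union> (Sa \<union> C)) #
        (map ((\<union>) U) (map ((\<union>) Sa) rest @ concat (map qg BB)) @ post)"
      using K(2) unfolding clA by simp
    have Saout: "y \<notin> Sa"
    proof
      assume "y \<in> Sa"
      then have "loc T y q" using s(1) s' ta(1) unfolding Sa_def loc_def by auto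
      then show False using yloc assms(5) q_def by blast
    qed
    have secout: "v \<noteq> y" if "st \<in> set AA \<union> set BB" "v \<in> fst st \<or> (\<exists>u p. snd st = Some u \<and> loc u v p)" for st v
    proof -
      from AB(2) that(1) obtain j where j: "j < length secs" "j \<noteq> a" "st = secs ! j" by blast
      from that(2) show ?thesis
      proof
        assume "v \<in> fst st"
        then have "loc T v q" using s(1) s' j unfolding loc_def by auto
        then show ?thesis using yloc assms(5) q_def by blast
      next
        assume "\<exists>u p. snd st = Some u \<and> loc u v p"
        then obtain u p where "snd st = Some u" "loc u v p" by blast
        then have "loc s v (j # p)" using j s' by (auto intro: loc_Q)
        then have "loc T v (q @ j # p)" by (rule loc_append[OF s(1)])
        moreover have "q @ j # p \<noteq> node T y" using r0 ar j by simp
        ultimately show ?thesis using yloc by blast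
      qed
    qed
    have qgout: "y \<notin> c" if "c \<in> set (concat (map qg AA)) \<or> c \<in> set (concat (map qg BB))" for c
    proof
      assume "y \<in> c"
      with that qg_mem obtain st where "st \<in> set AA \<union> set BB" "y \<in> fst st \<or> (\<exists>u p. snd st = Some u \<and> loc u y p)"
        by blast
      then show False using secout by blast
    qed
    have xA: "x \<notin> c" if "c \<in> set (concat (map qg AA))" for c
    proof
      assume "x \<in> c"
      with that qg_mem obtain st where st: "st \<in> set AA" "x \<in> fst st \<or> (\<exists>u p. snd st = Some u \<and> loc u x p)"
        by blast
      from AB(2) st(1) obtain j where j: "j < length secs" "j \<noteq> a" "st = secs ! j" by blast
      from st(2) show False
      proof
        assume "x \<in> fst st" then show False using AB(3) st(1) by blast
      next
        assume "\<exists>u p. snd st = Some u \<and> loc u x p"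
        then obtain u p where "snd st = Some u" "loc u x p" by blast
        then have "loc s x (j # p)" using j s' by (auto intro: loc_Q)
        then have "loc T x (q @ j # p)" by (rule loc_append[OF s(1)])
        then show False using xloc by auto
      qed
    qed
    have restout: "y \<notin> c" if "c \<in> set rest" for c
    proof
      assume "y \<in> c"
      with A(4) that obtain p' where "p' \<noteq> r1" "loc ta y p'" by blast
      then have "loc s y (a # p')" using ta s' by (auto intro: loc_Q)
      then have "loc T y (q @ a # p')" by (rule loc_append[OF s(1)])
      moreover have "q @ a # p' \<noteq> node T y" using r0 ar \<open>p' \<noteq> r1\<close> by simp
      ultimately show False using yloc by blast
    qed
    have "y \<in> U \<union> (Sa \<union> C)" using ySy A(3) by auto
    moreover have "x \<in> U \<union> (Sa \<union> C)" using xSa by auto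
    moreover have "\<forall>c\<in>set (pre @ map ((\<union>) U) (concat (map qg AA))) \<union>
        set (map ((\<union>) U) (map ((\<union>) Sa) rest @ concat (map qg BB)) @ post). y \<notin> c"
    proof
      fix c assume c: "c \<in> set (pre @ map ((\<union>) U) (concat (map qg AA))) \<union>
        set (map ((\<union>) U) (map ((\<union>) Sa) rest @ concat (map qg BB)) @ post)"
      have yU: "y \<notin> U" using outU by blast
      show "y \<notin> c"
      proof (cases "c \<in> set pre \<or> c \<in> set post")
        case True then show ?thesis using outU[of y] by auto
      next
        case False
        with c obtain c' where "c = U \<union> c'" "c' \<in> set (concat (map qg AA)) \<or> c' \<in> set (concat (map qg BB)) \<or>
            (\<exists>c''. c' = Sa \<union> c'' \<and> c'' \<in> set rest)" by auto
        then show ?thesis using yU qgout Saout restout by blast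
      qed
    qed
    moreover have "pre @ map ((\<union>) U) (concat (map qg AA)) \<noteq> [] \<longrightarrow> x \<notin> last (pre @ map ((\<union>) U) (concat (map qg AA)))"
    proof
      assume ne: "pre @ map ((\<union>) U) (concat (map qg AA)) \<noteq> []"
      show "x \<notin> last (pre @ map ((\<union>) U) (concat (map qg AA)))"
      proof (cases "concat (map qg AA) = []")
        case True
        then have h: "pre \<noteq> []" "last (pre @ map ((\<union>) U) (concat (map qg AA))) = last pre" using ne by auto
        have "last pre \<in> set pre" using h(1) by simp
        have "x \<notin> last pre"
        proof
          assume "x \<in> last pre"
          with \<open>last pre \<in> set pre\<close> have "x \<in> \<Union>(set (pre @ post))" by auto
          then show False using outU[of x] by auto
        qed
        then show ?thesis using h(2) by simp
      next
        case False
        then have "last (pre @ map ((\<union>) U) (concat (map qg AA))) = U \<union> last (concat (map qg AA))"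
          by (simp add: last_map)
        moreover have "last (concat (map qg AA)) \<in> set (concat (map qg AA))" using False by (rule last_in_set)
        ultimately show ?thesis using xA outU[of x] by auto
      qed
    qed
    ultimately show ?thesis using fin[OF K(1) cl] by blast
  qed
  then show ?thesis unfolding interval_edge_def V_def using assms(1,3) by simp
qed

end
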